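(* Let $R$ be a $*$-ring. Then the following are equivalent: (1) $R$ is strongly $J$-$*$-clean. (2) $R$ is uniquely clean and $R$ is strongly $*$-clean. (3) $R$ is uniquely strongly $*$-clean. (4) $R$ is uniquely $J$-$*$-clean. (5) For any $a\in R$, there exists a unique idempotent $e\in R$ such that $a-e\in U(R)$, $ae=ea$, $ae^*=e^*a$ and $e-e^*\in J(R)$.
   Context: All rings are associative with identity. A $*$-ring is a ring $R$ with an involution $*$, i.e. a map $a\mapsto a^*$ with $(a+b)^*=a^*+b^*$, $(ab)^*=b^*a^*$, $(a^* )^*=a$. $U(R)$ denotes the group of units and $J(R)$ the Jacobson radical of $R$. A projection is an element $e$ with $e^2=e=e^*$. $R$ is strongly $J$-$*$-clean if every $a\in R$ can be written $a=e+u$ with $e$ a projection, $u\in J(R)$ and $ae=ea$. $R$ is strongly $*$-clean if every $a\in R$ can be written $a=e+u$ with $e$ a projection, $u\in U(R)$ and $eu=ue$. $R$ is uniquely clean if every element of $R$ can be written uniquely as the sum of an idempotent and a unit. $R$ is uniquely strongly $*$-clean if for every $a\in R$ there exists a unique projection $e\in R$ such that $a-e\in U(R)$ and $ae=ea$. $R$ is uniquely $J$-$*$-clean if for every $a\in R$ there exists a unique projection $e\in R$ such that $a-e\in J(R)$. *)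

theory Defs
  imports Main
begin

definition star_ring :: "('a::ring_1 \<Rightarrow> 'a) \<Rightarrow> bool" where
  "star_ring st \<longleftrightarrow>
     (\<forall>a b. st (a + b) = st a + st b) \<and>
     (\<forall>a b. st (a * b) = st b * st a) \<and>
     (\<forall>a. st (st a) = a)"

definition units_of_ring :: "'a::ring_1 set" where
  "units_of_ring = {u. \<exists>v. u * v = 1 \<and> v * u = 1}"

definition left_ideal :: "'a::ring_1 set \<Rightarrow> bool" where
  "left_ideal I \<longleftrightarrow> 0 \<in> I \<and> (\<forall>x\<in>I. \<forall>y\<in>I. x + y \<in> I) \<and> (\<forall>x\<in>I. - x \<in> I)
     \<and> (\<forall>r. \<forall>x\<in>I. r * x \<in> I)"

definition maximal_left_ideal :: "'a::ring_1 set \<Rightarrow> bool" where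
  "maximal_left_ideal I \<longleftrightarrow> left_ideal I \<and> I \<noteq> UNIV \<and>
     (\<forall>L. left_ideal L \<and> I \<subseteq> L \<longrightarrow> L = I \<or> L = UNIV)"

definition jacobson :: "'a::ring_1 set" where
  "jacobson = \<Inter> {I. maximal_left_ideal I}"

definition idempotent :: "'a::ring_1 \<Rightarrow> bool" where
  "idempotent e \<longleftrightarrow> e * e = e"

definition projection :: "('a::ring_1 \<Rightarrow> 'a) \<Rightarrow> 'a \<Rightarrow> bool" where
  "projection st e \<longleftrightarrow> e * e = e \<and> st e = e"

definition strongly_J_star_clean :: "('a::ring_1 \<Rightarrow> 'a) \<Rightarrow> bool" where
  "strongly_J_star_clean st \<longleftrightarrow>
     (\<forall>a. \<exists>e u. a = e + u \<and> projection st e \<and> u \<in> jacobson \<and> a * e = e * a)"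

definition strongly_star_clean :: "('a::ring_1 \<Rightarrow> 'a) \<Rightarrow> bool" where
  "strongly_star_clean st \<longleftrightarrow>
     (\<forall>a. \<exists>e u. a = e + u \<and> projection st e \<and> u \<in> units_of_ring \<and> e * u = u * e)"

definition uniquely_clean :: "'a::ring_1 itself \<Rightarrow> bool" where
  "uniquely_clean _ \<longleftrightarrow>
     (\<forall>a::'a. \<exists>!(e, u). a = e + u \<and> idempotent e \<and> u \<in> units_of_ring)"

definition uniquely_strongly_star_clean :: "('a::ring_1 \<Rightarrow> 'a) \<Rightarrow> bool" where
  "uniquely_strongly_star_clean st \<longleftrightarrow>
     (\<forall>a. \<exists>!e. projection st e \<and> a - e \<in> units_of_ring \<and> a * e = e * a)"

definition uniquely_J_star_clean :: "('a::ring_1 \<Rightarrow> 'a) \<Rightarrow> bool" where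
  "uniquely_J_star_clean st \<longleftrightarrow>
     (\<forall>a. \<exists>!e. projection st e \<and> a - e \<in> jacobson)"

end

theory Submission
  imports Defs
begin



lemma unitI: "(u::'a::ring_1) * v = 1 \<Longrightarrow> v * u = 1 \<Longrightarrow> u \<in> units_of_ring"
  unfolding units_of_ring_def by blast

lemma unitE: assumes "(u::'a::ring_1) \<in> units_of_ring" obtains v where "u * v = 1" "v * u = 1"
  using assms unfolding units_of_ring_def by blast

lemma unit_mult: "(u::'a::ring_1) \<in> units_of_ring \<Longrightarrow> w \<in> units_of_ring \<Longrightarrow> u * w \<in> units_of_ring"
proof -
  assume "u \<in> units_of_ring" "w \<in> units_of_ring"
  then obtain u' w' where "u * u' = 1" "u' * u = 1" "w * w' = 1" "w' * w = 1" by (metis unitE)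
  then have "(u*w) * (w'*u') = 1" "(w'*u') * (u*w) = 1"
    by (simp_all add: mult.assoc) (metis mult.assoc mult_1_left)+
  then show ?thesis by (rule unitI)
qed

lemma unit_neg: "(u::'a::ring_1) \<in> units_of_ring \<Longrightarrow> - u \<in> units_of_ring"
  by (metis unitE unitI minus_mult_minus)

lemma unit_one: "(1::'a::ring_1) \<in> units_of_ring" by (rule unitI) simp_all

lemma zero_not_unit: "(0::'a::ring_1) \<notin> units_of_ring"
  by (metis unitE mult_zero_left zero_neq_one)

lemma idem_unit: "(e::'a::ring_1) * e = e \<Longrightarrow> e \<in> units_of_ring \<Longrightarrow> e = 1"
  by (metis unitE mult.assoc mult_1_right)

lemma left_inv_cancel: "(v::'a::ring_1) * u = 1 \<Longrightarrow> u * x = 0 \<Longrightarrow> x = 0"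
  by (metis mult.assoc mult_1_left mult_zero_right)

lemma right_inv_cancel: "(u::'a::ring_1) * v = 1 \<Longrightarrow> x * u = 0 \<Longrightarrow> x = 0"
  by (metis mult.assoc mult_1_right mult_zero_left)

lemma idem_sym_unit: "(e::'a::ring_1) * e = e \<Longrightarrow> (e + e - 1) \<in> units_of_ring"
proof -
  assume "e * e = e"
  then have "(e + e - 1) * (e + e - 1) = 1" by (simp add: algebra_simps)
  then show ?thesis by (metis unitI)
qed

lemma nil_unit: "(x::'a::ring_1) * x = 0 \<Longrightarrow> 1 - x \<in> units_of_ring"
proof -
  assume "x * x = 0"
  then have "(1 - x) * (1 + x) = 1" "(1 + x) * (1 - x) = 1" by (simp_all add: algebra_simps)
  then show ?thesis by (metis unitI)
qed

lemma left_ideal_UNIV: "left_ideal I \<Longrightarrow> (1::'a::ring_1) \<in> I \<Longrightarrow> I = UNIV"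
  unfolding left_ideal_def by (metis UNIV_eq_I mult_1_right)

lemma left_ideal_diff: "left_ideal I \<Longrightarrow> x \<in> I \<Longrightarrow> y \<in> I \<Longrightarrow> (x::'a::ring_1) - y \<in> I"
  unfolding left_ideal_def by (metis diff_conv_add_uminus)

lemma exists_maximal:
  assumes I: "left_ideal (I::'a::ring_1 set)" and n1: "1 \<notin> I"
  shows "\<exists>M. maximal_left_ideal M \<and> I \<subseteq> M"
proof -
  define A where "A = {L. left_ideal L \<and> I \<subseteq> L \<and> (1::'a) \<notin> L}"
  have "A \<noteq> {}" using I n1 unfolding A_def by blast
  moreover have "\<Union>C \<in> A" if Cne: "C \<noteq> {}" and chC: "subset.chain A C" for C
  proof -
    have CA: "C \<subseteq> A" and ch: "\<forall>X\<in>C. \<forall>Y\<in>C. X \<subseteq> Y \<or> Y \<subseteq> X"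
      using chC by (auto simp: subset_chain_def)
    have "left_ideal (\<Union>C)"
      unfolding left_ideal_def
    proof (intro conjI ballI allI)
      obtain X where X: "X \<in> C" using Cne by blast
      then have "left_ideal X" using CA unfolding A_def by auto
      then show "0 \<in> \<Union>C" using X unfolding left_ideal_def by blast
    next
      fix x y assume "x \<in> \<Union>C" "y \<in> \<Union>C"
      then obtain X Y where XY: "X \<in> C" "Y \<in> C" "x \<in> X" "y \<in> Y" by blast
      have LX: "left_ideal X" and LY: "left_ideal Y" using XY(1,2) CA unfolding A_def by auto
      show "x + y \<in> \<Union>C"
      proof (cases "X \<subseteq> Y")
        case True
        then have "x \<in> Y" using XY(3) by blast
        then have "x + y \<in> Y" using LY XY(4) unfolding left_ideal_def by blast
        then show ?thesis using XY(2) by blast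
      next
        case False then have "Y \<subseteq> X" using ch XY(1,2) by blast
        then have "y \<in> X" using XY(4) by blast
        then have "x + y \<in> X" using LX XY(3) unfolding left_ideal_def by blast
        then show ?thesis using XY(1) by blast
      qed
    next
      fix x assume "x \<in> \<Union>C"
      then obtain X where X: "X \<in> C" "x \<in> X" by blast
      then have "left_ideal X" using CA unfolding A_def by auto
      then have "- x \<in> X" using X unfolding left_ideal_def by blast
      then show "- x \<in> \<Union>C" using X by blast
    next
      fix r x assume "x \<in> \<Union>C"
      then obtain X where X: "X \<in> C" "x \<in> X" by blast
      then have "left_ideal X" using CA unfolding A_def by auto
      then have "r * x \<in> X" using X unfolding left_ideal_def by blast
      then show "r * x \<in> \<Union>C" using X by blast
    qed
    moreover have "I \<subseteq> \<Union>C" using Cne CA unfolding A_def by blast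
    moreover have "1 \<notin> \<Union>C" using CA unfolding A_def by blast
    ultimately show ?thesis unfolding A_def by blast
  qed
  ultimately obtain M where M: "M \<in> A" "\<forall>X\<in>A. M \<subseteq> X \<longrightarrow> X = M"
    using subset_Zorn_nonempty[of A] by blast
  have "maximal_left_ideal M"
    unfolding maximal_left_ideal_def
  proof (intro conjI allI impI)
    show "left_ideal M" using M unfolding A_def by blast
    show "M \<noteq> UNIV" using M unfolding A_def by blast
  next
    fix L assume L: "left_ideal L \<and> M \<subseteq> L"
    show "L = M \<or> L = UNIV"
    proof (cases "1 \<in> L")
      case True then show ?thesis using L left_ideal_UNIV by blast
    next
      case False then have "L \<in> A" using L M unfolding A_def by blast
      then show ?thesis using M L by blast
    qed
  qed
  then show ?thesis using M unfolding A_def by blast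
qed

lemma maximal_in_J: "x \<in> jacobson \<Longrightarrow> maximal_left_ideal M \<Longrightarrow> x \<in> M"
  unfolding jacobson_def by blast

lemma J_left_ideal: "left_ideal (jacobson :: 'a::ring_1 set)"
  unfolding left_ideal_def jacobson_def maximal_left_ideal_def by auto

lemma J_zero: "0 \<in> jacobson" using J_left_ideal unfolding left_ideal_def by blast
lemma J_add: "x \<in> jacobson \<Longrightarrow> y \<in> jacobson \<Longrightarrow> x + y \<in> jacobson"
  using J_left_ideal unfolding left_ideal_def by blast
lemma J_neg: "x \<in> jacobson \<Longrightarrow> - x \<in> jacobson"
  using J_left_ideal unfolding left_ideal_def by blast
lemma J_diff: "x \<in> jacobson \<Longrightarrow> y \<in> jacobson \<Longrightarrow> x - y \<in> jacobson"
  using J_left_ideal left_ideal_diff by blast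
lemma J_lmult: "x \<in> jacobson \<Longrightarrow> r * x \<in> jacobson"
  using J_left_ideal unfolding left_ideal_def by blast
lemma J_neg_iff: "- x \<in> jacobson \<longleftrightarrow> x \<in> jacobson"
  using J_neg by fastforce

lemma J_left_inv:
  assumes x: "(x::'a::ring_1) \<in> jacobson" shows "\<exists>t. t * (1 - x) = 1"
proof (rule ccontr)
  assume no: "\<not> ?thesis"
  define L where "L = {r * (1 - x) | r. True}"
  have "left_ideal L" unfolding left_ideal_def
  proof (intro conjI ballI allI)
    have "0 = 0 * (1 - x)" by simp
    then show "0 \<in> L" unfolding L_def by blast
  next
    fix a b assume "a \<in> L" "b \<in> L"
    then obtain r1 r2 where "a = r1 * (1 - x)" "b = r2 * (1 - x)" unfolding L_def by blast
    then have "a + b = (r1 + r2) * (1 - x)" by (simp add: distrib_right)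
    then show "a + b \<in> L" unfolding L_def by blast
  next
    fix a assume "a \<in> L"
    then obtain r1 where "a = r1 * (1 - x)" unfolding L_def by blast
    then have "- a = (- r1) * (1 - x)" by simp
    then show "- a \<in> L" unfolding L_def by blast
  next
    fix s a assume "a \<in> L"
    then obtain r1 where "a = r1 * (1 - x)" unfolding L_def by blast
    then have "s * a = (s * r1) * (1 - x)" by (simp add: mult.assoc)
    then show "s * a \<in> L" unfolding L_def by blast
  qed
  moreover have "1 \<notin> L" using no unfolding L_def by auto
  ultimately obtain M where M: "maximal_left_ideal M" "L \<subseteq> M" using exists_maximal by blast
  have "1 - x \<in> M" using M unfolding L_def by (force intro: exI[of _ 1])
  moreover have "x \<in> M" using x M maximal_in_J by blast
  ultimately have "1 \<in> M" using M unfolding maximal_left_ideal_def left_ideal_def by (metis diff_add_cancel)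
  then show False using M left_ideal_UNIV unfolding maximal_left_ideal_def by blast
qed

lemma J_unit:
  assumes x: "(x::'a::ring_1) \<in> jacobson" shows "1 - x \<in> units_of_ring"
proof -
  obtain t where t: "t * (1 - x) = 1" using J_left_inv[OF x] by blast
  have "t = 1 - (- (t * x))" using t by (simp add: algebra_simps)
  moreover have "- (t * x) \<in> jacobson" using x J_lmult J_neg by blast
  ultimately obtain t' where t': "t' * t = 1" using J_left_inv by metis
  have "t' = 1 - x" by (metis t t' mult.assoc mult_1_left mult_1_right)
  then show ?thesis using t t' by (metis unitI)
qed

lemma J_crit:
  assumes h: "\<And>r. \<exists>t. t * (1 - r * (x::'a::ring_1)) = 1" shows "x \<in> jacobson"
  unfolding jacobson_def
proof
  fix M :: "'a set" assume "M \<in> {I. maximal_left_ideal I}"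
  then have M: "maximal_left_ideal M" by simp
  then have LM: "left_ideal M" and MU: "M \<noteq> UNIV" unfolding maximal_left_ideal_def by auto
  show "x \<in> M"
  proof (rule ccontr)
    assume xM: "x \<notin> M"
    define L where "L = {m + r * x | m r. m \<in> M}"
    have "left_ideal L" unfolding left_ideal_def L_def
    proof (intro conjI ballI allI)
      show "0 \<in> {m + r * x |m r. m \<in> M}" using LM unfolding left_ideal_def by (force intro: exI[of _ 0])
    next
      fix a b assume "a \<in> {m + r * x |m r. m \<in> M}" "b \<in> {m + r * x |m r. m \<in> M}"
      then obtain m1 r1 m2 r2 where "a = m1 + r1 * x" "b = m2 + r2 * x" "m1 \<in> M" "m2 \<in> M" by blast
      moreover have "a + b = (m1 + m2) + (r1 + r2) * x" using \<open>a = _\<close> \<open>b = _\<close> by (simp add: algebra_simps)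
      moreover have "m1 + m2 \<in> M" using LM \<open>m1 \<in> M\<close> \<open>m2 \<in> M\<close> unfolding left_ideal_def by blast
      ultimately show "a + b \<in> {m + r * x |m r. m \<in> M}" by blast
    next
      fix a assume "a \<in> {m + r * x |m r. m \<in> M}"
      then obtain m1 r1 where "a = m1 + r1 * x" "m1 \<in> M" by blast
      moreover have "- a = (- m1) + (- r1) * x" using \<open>a = _\<close> by (simp add: algebra_simps)
      moreover have "- m1 \<in> M" using LM \<open>m1 \<in> M\<close> unfolding left_ideal_def by blast
      ultimately show "- a \<in> {m + r * x |m r. m \<in> M}" by blast
    next
      fix s a assume "a \<in> {m + r * x |m r. m \<in> M}"
      then obtain m1 r1 where "a = m1 + r1 * x" "m1 \<in> M" by blast
      moreover have "s * a = (s * m1) + (s * r1) * x" using \<open>a = _\<close> by (simp add: algebra_simps)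
      moreover have "s * m1 \<in> M" using LM \<open>m1 \<in> M\<close> unfolding left_ideal_def by blast
      ultimately show "s * a \<in> {m + r * x |m r. m \<in> M}" by blast
    qed
    moreover have "M \<subseteq> L" unfolding L_def by (force intro: exI[of _ 0])
    moreover have "x \<in> L" unfolding L_def using LM unfolding left_ideal_def by (force intro: exI[of _ 0] exI[of _ 1])
    ultimately have "L = UNIV" using M xM unfolding maximal_left_ideal_def by blast
    then obtain m r where mr: "1 = m + r * x" "m \<in> M" unfolding L_def by blast
    obtain t where "t * (1 - r * x) = 1" using h by blast
    moreover have "1 - r * x = m" using mr by (simp add: algebra_simps)
    ultimately have "1 \<in> M" using mr LM unfolding left_ideal_def by metis
    then show False using MU LM left_ideal_UNIV by blast
  qed
qed

lemma one_notin_J: "(1::'a::ring_1) \<notin> jacobson"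
  using J_unit zero_not_unit by fastforce

lemma unit_plus_J: assumes u: "(u::'a::ring_1) \<in> units_of_ring" and j: "j \<in> jacobson"
  shows "u + j \<in> units_of_ring"
proof -
  obtain v where v: "u * v = 1" "v * u = 1" using u unitE by blast
  have "- (v * j) \<in> jacobson" using j J_lmult J_neg by blast
  then have "1 - (- (v * j)) \<in> units_of_ring" by (rule J_unit)
  then have "u * (1 - (- (v * j))) \<in> units_of_ring" using u unit_mult by blast
  moreover have "u * (1 - (- (v * j))) = u + j" using v by (simp add: algebra_simps mult.assoc[symmetric])
  ultimately show ?thesis by simp
qed

lemma J_rmult: assumes x: "(x::'a::ring_1) \<in> jacobson" shows "x * t \<in> jacobson"
proof (rule J_crit)
  fix r
  have "t * r * x \<in> jacobson" using x J_lmult by blast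
  then obtain c where c: "c * (1 - t * r * x) = 1" using J_unit unitE by metis
  have "(1 + r * x * c * t) * (1 - r * (x * t)) = 1 - r*x*t + r*x*(c * (1 - t*r*x))*t"
    by (simp add: algebra_simps mult.assoc)
  also have "\<dots> = 1" using c by simp
  finally show "\<exists>s. s * (1 - r * (x * t)) = 1" by blast
qed

lemma L1: assumes x: "(x::'a::ring_1) \<in> jacobson" and c: "x * x * x = x" shows "x = 0"
proof -
  have "x * x \<in> jacobson" using x J_lmult by blast
  then obtain v where v: "(1 - x * x) * v = 1" using J_unit unitE by metis
  have "x * (1 - x * x) = 0" using c by (simp add: algebra_simps mult.assoc)
  then show ?thesis using v right_inv_cancel[of "1 - x*x" v x] by simp
qed




lemma ci_sq:
  assumes e: "(e::'a::ring_1) * e = e" and f: "f * f = f" and c: "e * f = f * e"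
  shows "(e - f) * (e - f) = e + f - e * f - e * f"
  by (simp add: algebra_simps e f c)

lemma ci_cube:
  assumes e: "(e::'a::ring_1) * e = e" and f: "f * f = f" and c: "e * f = f * e"
  shows "(e - f) * (e - f) * (e - f) = e - f"
proof -
  have e2: "e * (e * x) = e * x" for x by (metis e mult.assoc)
  have f2: "f * (f * x) = f * x" for x by (metis f mult.assoc)
  have c2: "f * (e * x) = e * (f * x)" for x by (metis c mult.assoc)
  have "(e + f - e * f - e * f) * (e - f) = e - f"
    by (simp add: algebra_simps e f c mult.assoc e2 f2 c2)
  then show ?thesis using ci_sq[OF e f c] by simp
qed

lemma ci_unit:
  assumes e: "(e::'a::ring_1) * e = e" and f: "f * f = f" and c: "e * f = f * e"
    and u: "e - f \<in> units_of_ring"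
  shows "f = 1 - e"
proof -
  have e2: "e * (e * x) = e * x" for x by (metis e mult.assoc)
  obtain d' where d': "d' * (e - f) = 1" using u unitE by metis
  have "(e - f) * ((e - f) * (e - f) - 1) = 0"
    using ci_cube[OF e f c] by (simp add: right_diff_distrib mult.assoc[symmetric])
  then have "(e - f) * (e - f) - 1 = 0" using left_inv_cancel[OF d'] by blast
  then have sq: "e + f - e * f - e * f = 1" using ci_sq[OF e f c] by simp
  have "e * (e + f - e * f - e * f) = e - e * f" by (simp add: algebra_simps e e2)
  then have "e * f = 0" using sq by simp
  then show ?thesis using sq by (simp add: algebra_simps)
qed

locale srg =
  fixes st :: "'a::ring_1 \<Rightarrow> 'a"
  assumes sr: "star_ring st"
begin

lemma st_add: "st (a + b) = st a + st b" using sr unfolding star_ring_def by blast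
lemma st_mult: "st (a * b) = st b * st a" using sr unfolding star_ring_def by blast
lemma st_st[simp]: "st (st a) = a" using sr unfolding star_ring_def by blast
lemma st_0[simp]: "st 0 = 0"
proof -
  have h: "st (0 + 0) = st 0 + st 0" by (rule st_add)
  have "st 0 + st 0 = st 0 + 0" unfolding h[symmetric] by simp
  then show ?thesis by (rule add_left_imp_eq)
qed
lemma st_neg: "st (- a) = - st a"
proof -
  have h: "st (- a + a) = st (- a) + st a" by (rule st_add)
  have "st (- a) + st a = 0" unfolding h[symmetric] by simp
  then show ?thesis by (simp add: eq_neg_iff_add_eq_0)
qed
lemma st_diff: "st (a - b) = st a - st b" by (metis diff_conv_add_uminus st_add st_neg)
lemma st_1[simp]: "st 1 = 1"
proof -
  have "1 = st (st 1 * 1)" by simp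
  also have "\<dots> = st 1 * st (st 1)" by (rule st_mult)
  also have "\<dots> = st 1" by simp
  finally show ?thesis by (rule sym)
qed

lemma unit_st: assumes "u \<in> units_of_ring" shows "st u \<in> units_of_ring"
proof -
  obtain v where v: "u * v = 1" "v * u = 1" using assms unitE by blast
  have "st u * st v = 1" using v(2) st_mult[of v u] by simp
  moreover have "st v * st u = 1" using v(1) st_mult[of u v] by simp
  ultimately show ?thesis by (rule unitI)
qed

lemma J_star: assumes x: "x \<in> jacobson" shows "st x \<in> jacobson"
proof (rule J_crit)
  fix r
  have "x * st r \<in> jacobson" using x J_rmult by blast
  then have "1 - x * st r \<in> units_of_ring" by (rule J_unit)
  then have "st (1 - x * st r) \<in> units_of_ring" by (rule unit_st)
  moreover have "st (1 - x * st r) = 1 - r * st x" by (simp add: st_diff st_mult)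
  ultimately obtain t where "(1 - r * st x) * t = 1" "t * (1 - r * st x) = 1" by (metis unitE)
  then show "\<exists>t. t * (1 - r * st x) = 1" by blast
qed

lemma idem_st: "e * e = e \<Longrightarrow> st e * st e = st e" using st_mult[of e e] by simp

lemma proj_compl: "projection st e \<Longrightarrow> projection st (1 - e)"
  unfolding projection_def by (simp add: algebra_simps st_diff)

lemma CENT:
  fixes g r :: 'a
  assumes P: "\<And>g. g * g = g \<Longrightarrow> st g = g" and g: "g * g = g"
  shows "g * r = r * g"
proof -
  have half: "h * s * (1 - h) = 0" if h: "h * h = h" for h s :: 'a
  proof -
    have h2: "h * (h * y) = h * y" for y by (metis h mult.assoc)
    define x where "x = h * s * (1 - h)"
    have hx: "h * x = x" unfolding x_def by (simp add: mult.assoc[symmetric] h)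
    have xh: "x * h = 0" unfolding x_def by (simp add: algebra_simps h mult.assoc)
    have "x * x = x * (h * (s * (1 - h)))" by (simp add: x_def mult.assoc)
    also have "\<dots> = (x * h) * (s * (1 - h))" by (simp only: mult.assoc)
    also have "\<dots> = 0" using xh by simp
    finally have xx: "x * x = 0" .
    have "(h + x) * (h + x) = h + x"
      by (simp add: distrib_left distrib_right h hx xh xx)
    then have "st (h + x) = h + x" using P by blast
    then have "h + st x = h + x" using P[OF h] by (simp add: st_add)
    then have sx: "st x = x" by simp
    have sxe: "st x = (1 - h) * (st s * h)" unfolding x_def using P[OF h] by (simp add: st_mult st_diff mult.assoc)
    have "h * ((1 - h) * (st s * h)) = 0" by (simp add: algebra_simps h2)
    then have hsx: "h * st x = 0" by (simp only: sxe)
    have "x = 0" using hx sx hsx by simp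
    then show ?thesis unfolding x_def .
  qed
  have a: "g * r * (1 - g) = 0" by (rule half[OF g])
  have g': "(1 - g) * (1 - g) = 1 - g" using g by (simp add: algebra_simps)
  have b: "(1 - g) * r * (1 - (1 - g)) = 0" by (rule half[OF g'])
  have "g * r * (1 - g) = g * r - g * r * g" by (simp add: right_diff_distrib)
  with a have "g * r - g * r * g = 0" by simp
  then have "g * r = g * r * g" by simp
  moreover have "(1 - g) * r * (1 - (1 - g)) = r * g - g * r * g" by (simp add: left_diff_distrib)
  with b have "r * g - g * r * g = 0" by simp
  then have "r * g = g * r * g" by simp
  ultimately show ?thesis by simp
qed

end



lemma DF:
  fixes a b :: "'a::ring_1"
  assumes Cn: "\<And>g r :: 'a. g * g = g \<Longrightarrow> g * r = r * g" and ba: "b * a = 1"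
  shows "a * b = 1"
proof -
  define h where "h = a * b"
  have hh: "h * h = h" unfolding h_def by (metis ba mult.assoc mult_1_right)
  have ha: "h * a = a" unfolding h_def by (metis ba mult.assoc mult_1_right)
  have "1 = b * (h * a)" using ha ba by simp
  also have "\<dots> = b * (a * h)" using Cn[OF hh] by simp
  also have "\<dots> = h" using ba by (simp add: mult.assoc[symmetric])
  finally show ?thesis unfolding h_def by simp
qed

context srg begin

lemma abs_SJ:
  assumes P: "\<And>g :: 'a. g * g = g \<Longrightarrow> st g = g"
    and ex: "\<And>a :: 'a. \<exists>e. e * e = e \<and> a - e \<in> units_of_ring"
    and un: "\<And>a e g :: 'a. e * e = e \<Longrightarrow> g * g = g \<Longrightarrow> a - e \<in> units_of_ring \<Longrightarrow> a - g \<in> units_of_ring \<Longrightarrow> e = g"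
  shows "strongly_J_star_clean st"
proof -
  have Cn: "\<And>g r :: 'a. g * g = g \<Longrightarrow> g * r = r * g" using CENT[OF P] by blast
  have vJ: "v - 1 \<in> jacobson" if v: "v \<in> units_of_ring" for v :: 'a
  proof -
    obtain v' where vv: "v * v' = 1" "v' * v = 1" using v unitE by blast
    show ?thesis
    proof (rule J_crit)
      fix r
      define y where "y = 1 - r * (v - 1)"
      obtain f where f: "f * f = f" "y - f \<in> units_of_ring" using ex by blast
      define w where "w = y - f"
      obtain w' where ww: "w * w' = 1" "w' * w = 1" using f(2) unitE unfolding w_def by blast
      have fc: "\<And>z. f * z = z * f" using Cn f(1) by blast
      have fw: "f * w = - (f * r * (v - 1))"
        unfolding w_def y_def by (simp add: algebra_simps f(1))
      define t where "t = - (w' * f * r)"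
      have "f = (w' * w) * f" using ww by simp
      also have "\<dots> = w' * (f * w)" using fc[of w] by (simp add: mult.assoc)
      also have "\<dots> = t * (v - 1)" unfolding fw t_def by (simp add: mult.assoc)
      finally have tv: "t * (v - 1) = f" by simp
      define L where "L = t * f + v' * (1 - f)"
      have e1: "f * (v - f) = (v - 1) * f" using fc[of v] f(1) by (simp add: algebra_simps)
      have e2: "(1 - f) * (v - f) = v * (1 - f)" using fc[of v] f(1) by (simp add: algebra_simps)
      have "L * (v - f) = t * (f * (v - f)) + v' * ((1 - f) * (v - f))"
        unfolding L_def by (simp add: distrib_right mult.assoc)
      also have "\<dots> = (t * (v - 1)) * f + (v' * v) * (1 - f)" by (simp add: e1 e2 mult.assoc)
      also have "\<dots> = 1" using tv vv f(1) by simp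
      finally have "L * (v - f) = 1" .
      then have "(v - f) * L = 1" using DF[OF Cn] by blast
      then have "v - f \<in> units_of_ring" using \<open>L * (v - f) = 1\<close> unitI by blast
      moreover have "v - 0 \<in> units_of_ring" using v by simp
      ultimately have "0 = f" using un[of 0 f v] f(1) by simp
      then have "w = y" unfolding w_def by simp
      then have "w' * (1 - r * (v - 1)) = 1" using ww unfolding y_def by simp
      then show "\<exists>t. t * (1 - r * (v - 1)) = 1" by blast
    qed
  qed
  have "(- 1 - 1 :: 'a) \<in> jacobson" using vJ[of "-1"] unit_neg[OF unit_one] by simp
  then have two: "(1 + 1 :: 'a) \<in> jacobson" using J_neg by fastforce
  show ?thesis unfolding strongly_J_star_clean_def
  proof
    fix a :: 'a
    obtain e where e: "e * e = e" "a - e \<in> units_of_ring" using ex by blast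
    define p where "p = 1 - e"
    have pp: "projection st p" unfolding projection_def p_def using e(1) P[OF e(1)]
      by (simp add: algebra_simps st_diff)
    have "a - e - 1 \<in> jacobson" using vJ[OF e(2)] .
    moreover have "e * (1 + 1) \<in> jacobson" using two J_lmult by blast
    ultimately have "(a - e - 1) + e * (1 + 1) \<in> jacobson" by (rule J_add)
    moreover have "(a - e - 1) + e * (1 + 1) = a - p" unfolding p_def by (simp add: algebra_simps mult_2_right)
    ultimately have "a - p \<in> jacobson" by metis
    moreover have "a * p = p * a" using Cn pp unfolding projection_def by metis
    ultimately show "\<exists>e u. a = e + u \<and> projection st e \<and> u \<in> jacobson \<and> a * e = e * a"
      using pp by (intro exI[of _ p] exI[of _ "a - p"]) simp
  qed
qed

lemma SJ_P:
  fixes g :: 'a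
  assumes SJ: "strongly_J_star_clean st" and g: "g * g = g"
  shows "st g = g"
proof -
  obtain e u where eu: "g = e + u" "projection st e" "u \<in> jacobson" "g * e = e * g"
    using SJ unfolding strongly_J_star_clean_def by blast
  have e: "e * e = e" "st e = e" using eu(2) unfolding projection_def by auto
  have "(g - e) * (g - e) * (g - e) = g - e" using ci_cube[OF g e(1) eu(4)] .
  moreover have "g - e = u" using eu(1) by simp
  ultimately have "u = 0" using L1 eu(3) by metis
  then show ?thesis using eu(1) e by simp
qed

lemma SJ_C:
  fixes g r :: 'a
  assumes SJ: "strongly_J_star_clean st" and g: "g * g = g"
  shows "g * r = r * g"
  using CENT[OF SJ_P[OF SJ] g] .

lemma SJ_vJ:
  fixes v :: 'a
  assumes SJ: "strongly_J_star_clean st" and v: "v \<in> units_of_ring"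
  shows "v - 1 \<in> jacobson"
proof -
  obtain e u where eu: "v = e + u" "projection st e" "u \<in> jacobson" "v * e = e * v"
    using SJ unfolding strongly_J_star_clean_def by blast
  have e: "e * e = e" using eu(2) unfolding projection_def by auto
  have ue: "u * e = e * u" using SJ_C[OF SJ e] by simp
  have "v * v - v = (e + e + u - 1) * u" unfolding eu(1) by (simp add: algebra_simps e ue)
  then have vv: "v * v - v \<in> jacobson" using J_lmult eu(3) by simp
  obtain v' where "v' * v = 1" using v unitE by blast
  then have "v' * (v * v - v) = v - 1" by (simp add: algebra_simps mult.assoc[symmetric])
  then show ?thesis using J_lmult[OF vv, of v'] by simp
qed

lemma SJ_un:
  fixes a e g :: 'a
  assumes SJ: "strongly_J_star_clean st" and e: "e * e = e" and g: "g * g = g"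
    and ae: "a - e \<in> units_of_ring" and ag: "a - g \<in> units_of_ring"
  shows "e = g"
proof -
  have "(a - g - 1) - (a - e - 1) \<in> jacobson" using SJ_vJ[OF SJ ae] SJ_vJ[OF SJ ag] J_diff by blast
  moreover have "(a - g - 1) - (a - e - 1) = e - g" by simp
  ultimately have "e - g \<in> jacobson" by simp
  moreover have "(e - g) * (e - g) * (e - g) = e - g" using ci_cube[OF e g SJ_C[OF SJ e]] .
  ultimately have "e - g = 0" using L1 by blast
  then show ?thesis by simp
qed

lemma SJ_ex:
  fixes a :: 'a
  assumes SJ: "strongly_J_star_clean st"
  shows "\<exists>p. projection st p \<and> a - p \<in> units_of_ring \<and> a * p = p * a"
proof -
  obtain e u where eu: "a = e + u" "projection st e" "u \<in> jacobson" "a * e = e * a"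
    using SJ unfolding strongly_J_star_clean_def by blast
  have e: "e * e = e" using eu(2) unfolding projection_def by auto
  have "projection st (1 - e)" using proj_compl[OF eu(2)] .
  moreover have eq: "a - (1 - e) = (e + e - 1) + u" using eu(1) by (simp add: algebra_simps)
  have "a - (1 - e) \<in> units_of_ring" unfolding eq using unit_plus_J[OF idem_sym_unit[OF e] eu(3)] .
  moreover have "a * (1 - e) = (1 - e) * a" using eu(4) by (simp add: algebra_simps)
  ultimately show ?thesis by blast
qed

lemma SC_P:
  fixes g :: 'a
  assumes SC: "strongly_star_clean st" and g: "g * g = g"
  shows "st g = g"
proof -
  obtain p u where pu: "g = p + u" "projection st p" "u \<in> units_of_ring" "p * u = u * p"
    using SC unfolding strongly_star_clean_def by blast
  have p: "p * p = p" "st p = p" using pu(2) unfolding projection_def by auto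
  have "g * p = p * g" unfolding pu(1) using pu(4) p by (simp add: algebra_simps)
  moreover have "g - p \<in> units_of_ring" using pu(1,3) by simp
  ultimately have "p = 1 - g" using ci_unit[OF g p(1)] by blast
  then have "g = 1 - p" by simp
  then show ?thesis using p by (simp add: st_diff)
qed

lemma P5_P:
  fixes g :: 'a
  assumes P5: "\<forall>a. \<exists>!e. idempotent e \<and> a - e \<in> units_of_ring \<and> a * e = e * a
                      \<and> a * st e = st e * a \<and> e - st e \<in> jacobson"
    and g: "g * g = g"
  shows "st g = g"
proof -
  obtain e where e: "e * e = e" "g - e \<in> units_of_ring" "g * e = e * g" "g * st e = st e * g"
      "e - st e \<in> jacobson"
    using P5 unfolding idempotent_def by blast
  have e1: "e = 1 - g" using ci_unit[OF g e(1) e(3) e(2)] .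
  have se: "st e = 1 - st g" unfolding e1 by (simp add: st_diff)
  have c: "g * st g = st g * g" using e(4) unfolding se by (simp add: algebra_simps)
  have "e - st e = - (g - st g)" by (simp only: se) (simp add: e1)
  then have gJ: "g - st g \<in> jacobson" using e(5) J_neg_iff by metis
  have "(g - st g) * (g - st g) * (g - st g) = g - st g" using ci_cube[OF g idem_st[OF g] c] .
  then have "g - st g = 0" using L1 gJ by blast
  then show ?thesis by simp
qed

end



lemma inv_comm:
  fixes z zi x :: "'a::ring_1"
  assumes "z * zi = 1" "zi * z = 1" "z * x = x * z"
  shows "zi * x = x * zi"
proof -
  have "zi * x = zi * x * (z * zi)" using assms(1) by simp
  also have "\<dots> = zi * (x * z) * zi" by (simp add: mult.assoc)
  also have "\<dots> = zi * (z * x) * zi" using assms(3) by simp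
  also have "\<dots> = x * zi" using assms(2) by (simp add: mult.assoc[symmetric])
  finally show ?thesis .
qed

context srg begin

lemma UJ_SJ:
  assumes UJ: "uniquely_J_star_clean st"
  shows "strongly_J_star_clean st"
proof -
  have unJ: "\<And>a e g :: 'a. projection st e \<Longrightarrow> projection st g \<Longrightarrow> a - e \<in> jacobson \<Longrightarrow> a - g \<in> jacobson \<Longrightarrow> e = g"
    using UJ unfolding uniquely_J_star_clean_def by blast
  have exJ: "\<And>a :: 'a. \<exists>e. projection st e \<and> a - e \<in> jacobson"
    using UJ unfolding uniquely_J_star_clean_def by blast
  obtain p :: 'a where p: "projection st p" "- 1 - p \<in> jacobson" using exJ by blast
  have "- (- 1 - p) \<in> jacobson" using p(2) J_neg by blast
  then have "1 - (- (- 1 - p)) \<in> units_of_ring" by (rule J_unit)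
  then have "- p \<in> units_of_ring" by simp
  then have "- (- p) \<in> units_of_ring" by (rule unit_neg)
  moreover have "p * p = p" using p(1) unfolding projection_def by simp
  ultimately have "p = 1" using idem_unit by simp
  then have "- (- 1 - 1 :: 'a) \<in> jacobson" using J_neg[OF p(2)] by simp
  then have two: "(1 + 1 :: 'a) \<in> jacobson" by simp
  have bool: "a * a - a \<in> jacobson" for a :: 'a
  proof -
    obtain e where e: "projection st e" "a - e \<in> jacobson" using exJ by blast
    have ee: "e * e = e" using e(1) unfolding projection_def by simp
    have "a * (a - e) + (a - e) * e - (a - e) = a * a - a"
      by (simp add: algebra_simps ee)
    moreover have "a * (a - e) + (a - e) * e - (a - e) \<in> jacobson"
      using J_diff[OF J_add[OF J_lmult[OF e(2)] J_rmult[OF e(2)]] e(2)] .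
    ultimately show ?thesis by metis
  qed
  have comm: "x * y - y * x \<in> jacobson" for x y :: 'a
  proof -
    have "((x + y) * (x + y) - (x + y)) - (x * x - x) - (y * y - y) = x * y + y * x"
      by (simp add: algebra_simps)
    then have "x * y + y * x \<in> jacobson" using bool J_diff by metis
    moreover have "(1 + 1) * (y * x) \<in> jacobson" using two J_rmult by blast
    ultimately have "(x * y + y * x) - (1 + 1) * (y * x) \<in> jacobson" by (rule J_diff)
    moreover have "(x * y + y * x) - (1 + 1) * (y * x) = x * y - y * x" by (simp add: algebra_simps mult_2)
    ultimately show ?thesis by metis
  qed
  have half: "e * r * (1 - e) = 0" if e: "projection st e" for e r :: 'a
  proof -
    have ee: "e * e = e" and se: "st e = e" using e unfolding projection_def by auto
    have e2: "e * (e * y) = e * y" for y by (metis ee mult.assoc)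
    define s where "s = e * r * (1 - e)"
    have "e * (r * (1 - e)) - (r * (1 - e)) * e \<in> jacobson" by (rule comm)
    moreover have "(r * (1 - e)) * e = 0" by (simp add: algebra_simps ee mult.assoc)
    ultimately have sJ: "s \<in> jacobson" unfolding s_def by (simp add: mult.assoc)
    have ss: "st s = (1 - e) * st r * e" unfolding s_def by (simp add: st_mult st_diff se mult.assoc)
    have sJ': "st s \<in> jacobson" using sJ J_star by blast
    have es: "e * s = s" unfolding s_def by (simp add: mult.assoc[symmetric] ee)
    have sE: "s * e = 0" unfolding s_def by (simp add: algebra_simps ee mult.assoc)
    have sss: "s * s = 0"
    proof -
      have "s * s = (s * e) * (r * (1 - e))" unfolding s_def by (simp add: algebra_simps)
      then show ?thesis using sE by simp
    qed
    define f where "f = e + s"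
    have ff: "f * f = f" unfolding f_def by (simp add: distrib_left distrib_right ee es sE sss)
    define F where "F = st f"
    have FF: "F * F = F" unfolding F_def using idem_st[OF ff] .
    have sF: "st F = f" unfolding F_def by simp
    define m where "m = 1 - f - F"
    have mU: "m \<in> units_of_ring"
    proof -
      have "- (e + e - 1) \<in> units_of_ring" using unit_neg idem_sym_unit[OF ee] by blast
      moreover have "- (s + st s) \<in> jacobson" using sJ sJ' J_add J_neg by blast
      ultimately have "- (e + e - 1) + - (s + st s) \<in> units_of_ring" by (rule unit_plus_J)
      moreover have "- (e + e - 1) + - (s + st s) = m"
        unfolding m_def F_def f_def by (simp add: st_add se algebra_simps)
      ultimately show ?thesis by simp
    qed
    have sm: "st m = m" unfolding m_def using sF by (simp add: st_diff F_def)
    define z where "z = m * m"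
    have zU: "z \<in> units_of_ring" unfolding z_def using unit_mult mU by blast
    obtain zi where zi: "z * zi = 1" "zi * z = 1" using zU unitE by blast
    have sz: "st z = z" unfolding z_def using sm by (simp add: st_mult)
    have fm: "f * m = - (f * F)" unfolding m_def by (simp add: algebra_simps ff)
    have mf: "m * f = - (F * f)" unfolding m_def by (simp add: algebra_simps ff)
    have Fm: "F * m = - (F * f)" unfolding m_def by (simp add: algebra_simps FF)
    have mF: "m * F = - (f * F)" unfolding m_def by (simp add: algebra_simps FF)
    have ff2: "f * (f * y) = f * y" for y by (metis ff mult.assoc)
    have FF2: "F * (F * y) = F * y" for y by (metis FF mult.assoc)
    have fz: "f * z = f * F * f"
    proof -
      have "f * z = (f * m) * m" unfolding z_def by (simp add: mult.assoc)
      also have "\<dots> = - (f * (F * m))" unfolding fm by (simp add: mult.assoc)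
      also have "\<dots> = f * F * f" unfolding Fm by (simp add: mult.assoc)
      finally show ?thesis .
    qed
    have zf: "z * f = f * F * f"
    proof -
      have "z * f = m * (m * f)" unfolding z_def by (simp add: mult.assoc)
      also have "\<dots> = - ((m * F) * f)" unfolding mf by (simp add: mult.assoc)
      also have "\<dots> = f * F * f" unfolding mF by (simp add: mult.assoc)
      finally show ?thesis .
    qed
    have Fz: "F * z = F * f * F"
    proof -
      have "F * z = (F * m) * m" unfolding z_def by (simp add: mult.assoc)
      also have "\<dots> = - (F * (f * m))" unfolding Fm by (simp add: mult.assoc)
      also have "\<dots> = F * f * F" unfolding fm by (simp add: mult.assoc)
      finally show ?thesis .
    qed
    have zF: "z * F = F * f * F"
    proof -
      have "z * F = m * (m * F)" unfolding z_def by (simp add: mult.assoc)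
      also have "\<dots> = - ((m * f) * F)" unfolding mF by (simp add: mult.assoc)
      also have "\<dots> = F * f * F" unfolding mf by (simp add: mult.assoc)
      finally show ?thesis .
    qed
    have zif: "zi * f = f * zi" using inv_comm[OF zi] fz zf by simp
    have ziF: "zi * F = F * zi" using inv_comm[OF zi] Fz zF by simp
    have szi: "st zi = zi"
    proof -
      have "st zi * z = 1" using zi(1) st_mult[of z zi] sz by simp
      have "st zi = st zi * (z * zi)" using zi(1) by simp
      also have "\<dots> = (st zi * z) * zi" by (simp add: mult.assoc)
      also have "\<dots> = zi" using \<open>st zi * z = 1\<close> by simp
      finally show ?thesis .
    qed
    define q where "q = zi * (F * f)"
    have sq: "st q = q"
    proof -
      have "st q = F * f * zi" unfolding q_def by (simp add: st_mult sF szi F_def mult.assoc)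
      also have "\<dots> = zi * (F * f)" using zif ziF by (metis mult.assoc)
      finally show ?thesis unfolding q_def .
    qed
    have qq: "q * q = q"
    proof -
      have "q * q = zi * (F * (f * zi) * F * f)" unfolding q_def by (simp add: mult.assoc)
      also have "\<dots> = zi * (zi * (F * (f * F * f)))"
      proof -
        have a1: "f * (zi * y) = zi * (f * y)" for y by (metis zif mult.assoc)
        have a2: "F * (zi * y) = zi * (F * y)" for y by (metis ziF mult.assoc)
        have a3: "f * zi = zi * f" using zif by simp
        show ?thesis by (simp add: mult.assoc a1 a2 a3)
      qed
      also have "\<dots> = zi * (zi * (z * (F * f)))"
      proof -
        have "F * (f * F * f) = z * (F * f)" using zF by (simp add: mult.assoc[symmetric])
        then show ?thesis by simp
      qed
      also have "\<dots> = q" unfolding q_def using zi(2) by (simp add: mult.assoc[symmetric])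
      finally show ?thesis .
    qed
    have fq: "f * q = f"
    proof -
      have "f * q = zi * (f * F * f)" unfolding q_def using zif by (metis mult.assoc)
      also have "\<dots> = f" unfolding zf[symmetric] using zi(2) by (simp add: mult.assoc[symmetric])
      finally show ?thesis .
    qed
    have qf: "q * f = q" unfolding q_def by (simp add: mult.assoc ff)
    have "q * f - f * q \<in> jacobson" by (rule comm)
    then have "q - f \<in> jacobson" using fq qf by simp
    then have "(q - f) + s \<in> jacobson" using sJ by (rule J_add)
    then have qe: "q - e \<in> jacobson" unfolding f_def by (simp add: algebra_simps)
    have pq: "projection st q" unfolding projection_def using qq sq by simp
    have "e - q \<in> jacobson" using J_neg[OF qe] by simp
    moreover have "e - e \<in> jacobson" using J_zero by simp
    ultimately have "e = q" using unJ[OF e pq] by blast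
    then have "f = f * e" using fq by simp
    also have "\<dots> = e" unfolding f_def by (simp add: distrib_right ee sE)
    finally have "s = 0" unfolding f_def by simp
    then show ?thesis unfolding s_def .
  qed
  have cent: "e * r = r * e" if e: "projection st e" for e r :: 'a
  proof -
    have a: "e * r * (1 - e) = 0" using half[OF e] .
    have b: "(1 - e) * r * (1 - (1 - e)) = 0" using half[OF proj_compl[OF e]] .
    have "e * r * (1 - e) = e * r - e * r * e" by (simp add: right_diff_distrib)
    with a have "e * r - e * r * e = 0" by simp
    then have "e * r = e * r * e" by simp
    moreover have "(1 - e) * r * (1 - (1 - e)) = r * e - e * r * e" by (simp add: left_diff_distrib)
    with b have "r * e - e * r * e = 0" by simp
    then have "r * e = e * r * e" by simp
    ultimately show ?thesis by simp
  qed
  show ?thesis unfolding strongly_J_star_clean_def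
  proof
    fix a :: 'a
    obtain e where e: "projection st e" "a - e \<in> jacobson" using exJ by blast
    have "a * e = e * a" using cent[OF e(1)] by simp
    then show "\<exists>e u. a = e + u \<and> projection st e \<and> u \<in> jacobson \<and> a * e = e * a"
      using e by (intro exI[of _ e] exI[of _ "a - e"]) simp
  qed
qed

end



lemma ex1_uniq: "\<exists>!x. P x \<Longrightarrow> P a \<Longrightarrow> P b \<Longrightarrow> a = b" by blast

context srg begin

abbreviation P5 where
  "P5 \<equiv> (\<forall>a. \<exists>!e. idempotent e \<and> a - e \<in> units_of_ring \<and> a * e = e * a
                      \<and> a * st e = st e * a \<and> e - st e \<in> jacobson)"

lemma SJ_UC: assumes SJ: "strongly_J_star_clean st" shows "uniquely_clean TYPE('a)"
  unfolding uniquely_clean_def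
proof
  fix a :: 'a
  obtain p where p: "projection st p" "a - p \<in> units_of_ring" "a * p = p * a" using SJ_ex[OF SJ] by blast
  have pp: "p * p = p" using p(1) unfolding projection_def by simp
  show "\<exists>!(e, u). a = e + u \<and> idempotent e \<and> u \<in> units_of_ring"
  proof (rule ex1I[of _ "(p, a - p)"])
    show "case (p, a - p) of (e, u) \<Rightarrow> a = e + u \<and> idempotent e \<and> u \<in> units_of_ring"
      using pp p(2) unfolding idempotent_def by simp
  next
    fix x assume x: "case x of (e, u) \<Rightarrow> a = e + u \<and> idempotent e \<and> u \<in> units_of_ring"
    obtain e u where xe: "x = (e, u)" by (cases x)
    then have eu: "a = e + u" "e * e = e" "u \<in> units_of_ring" using x unfolding idempotent_def by auto
    then have "a - e \<in> units_of_ring" by simp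
    then have "e = p" using SJ_un[OF SJ eu(2) pp _ p(2)] by blast
    then show "x = (p, a - p)" using xe eu(1) by simp
  qed
qed

lemma SJ_SC: assumes SJ: "strongly_J_star_clean st" shows "strongly_star_clean st"
  unfolding strongly_star_clean_def
proof
  fix a :: 'a
  obtain p where p: "projection st p" "a - p \<in> units_of_ring" "a * p = p * a" using SJ_ex[OF SJ] by blast
  have pp: "p * p = p" using p(1) unfolding projection_def by simp
  have "p * (a - p) = (a - p) * p" using p(3) by (simp add: algebra_simps)
  then show "\<exists>e u. a = e + u \<and> projection st e \<and> u \<in> units_of_ring \<and> e * u = u * e"
    using p by (intro exI[of _ p] exI[of _ "a - p"]) simp
qed

lemma UCSC_SJ: assumes UC: "uniquely_clean TYPE('a)" and SC: "strongly_star_clean st"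
  shows "strongly_J_star_clean st"
proof (rule abs_SJ)
  show P: "\<And>g :: 'a. g * g = g \<Longrightarrow> st g = g" using SC_P[OF SC] by blast
  have U1: "\<exists>!(e, u). a = e + u \<and> idempotent e \<and> u \<in> units_of_ring" for a :: 'a
    using UC unfolding uniquely_clean_def by blast
  show "\<exists>e. e * e = e \<and> a - e \<in> units_of_ring" for a :: 'a
  proof -
    obtain x where "case x of (e, u) \<Rightarrow> a = e + u \<and> idempotent e \<and> u \<in> units_of_ring"
      using ex1_implies_ex[OF U1[of a]] by blast
    then obtain e u where "a = e + u" "e * e = e" "u \<in> units_of_ring" unfolding idempotent_def
      by (cases x) auto
    then show ?thesis by (intro exI[of _ e]) simp
  qed
  show "e = g" if "e * e = e" "g * g = g" "a - e \<in> units_of_ring" "a - g \<in> units_of_ring" for a e g :: 'a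
  proof -
    have "(e, a - e) = (g, a - g)"
      by (rule ex1_uniq[OF U1[of a]]) (use that in \<open>simp_all add: idempotent_def\<close>)
    then show ?thesis by simp
  qed
qed

lemma SJ_USC: assumes SJ: "strongly_J_star_clean st" shows "uniquely_strongly_star_clean st"
  unfolding uniquely_strongly_star_clean_def
proof
  fix a :: 'a
  obtain p where p: "projection st p" "a - p \<in> units_of_ring" "a * p = p * a" using SJ_ex[OF SJ] by blast
  have pp: "p * p = p" using p(1) unfolding projection_def by simp
  show "\<exists>!e. projection st e \<and> a - e \<in> units_of_ring \<and> a * e = e * a"
  proof (rule ex1I[of _ p])
    show "projection st p \<and> a - p \<in> units_of_ring \<and> a * p = p * a" using p by simp
  next
    fix e assume e: "projection st e \<and> a - e \<in> units_of_ring \<and> a * e = e * a"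
    then have "e * e = e" unfolding projection_def by simp
    then show "e = p" using SJ_un[OF SJ _ pp _ p(2)] e by blast
  qed
qed

lemma USC_SJ: assumes USC: "uniquely_strongly_star_clean st" shows "strongly_J_star_clean st"
proof -
  have U1: "\<exists>!e. projection st e \<and> a - e \<in> units_of_ring \<and> a * e = e * a" for a :: 'a
    using USC unfolding uniquely_strongly_star_clean_def by blast
  have SC: "strongly_star_clean st" unfolding strongly_star_clean_def
  proof
    fix a :: 'a
    obtain e where e: "projection st e" "a - e \<in> units_of_ring" "a * e = e * a"
      using ex1_implies_ex[OF U1[of a]] by blast
    have "e * (a - e) = (a - e) * e" using e(3) by (simp add: algebra_simps)
    then show "\<exists>e u. a = e + u \<and> projection st e \<and> u \<in> units_of_ring \<and> e * u = u * e"
      using e by (intro exI[of _ e] exI[of _ "a - e"]) simp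
  qed
  have P: "\<And>g :: 'a. g * g = g \<Longrightarrow> st g = g" using SC_P[OF SC] by blast
  show ?thesis
  proof (rule abs_SJ[OF P])
    show "\<exists>e. e * e = e \<and> a - e \<in> units_of_ring" for a :: 'a
      using ex1_implies_ex[OF U1[of a]] unfolding projection_def by blast
    show "e = g" if "e * e = e" "g * g = g" "a - e \<in> units_of_ring" "a - g \<in> units_of_ring" for a e g :: 'a
    proof (rule ex1_uniq[OF U1[of a]])
      show "projection st e \<and> a - e \<in> units_of_ring \<and> a * e = e * a"
        using that P[of e] CENT[OF P that(1), of a] unfolding projection_def by simp
      show "projection st g \<and> a - g \<in> units_of_ring \<and> a * g = g * a"
        using that P[of g] CENT[OF P that(2), of a] unfolding projection_def by simp
    qed
  qed
qed

lemma SJ_UJ: assumes SJ: "strongly_J_star_clean st" shows "uniquely_J_star_clean st"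
  unfolding uniquely_J_star_clean_def
proof
  fix a :: 'a
  obtain p u where pu: "a = p + u" "projection st p" "u \<in> jacobson" "a * p = p * a"
    using SJ unfolding strongly_J_star_clean_def by blast
  show "\<exists>!e. projection st e \<and> a - e \<in> jacobson"
  proof (rule ex1I[of _ p])
    show "projection st p \<and> a - p \<in> jacobson" using pu by simp
  next
    fix e assume e: "projection st e \<and> a - e \<in> jacobson"
    have ee: "e * e = e" and pp: "p * p = p" using e pu(2) unfolding projection_def by auto
    have "a - p \<in> jacobson" using pu by simp
    moreover have "a - e \<in> jacobson" using e by simp
    ultimately have "(a - p) - (a - e) \<in> jacobson" by (rule J_diff)
    moreover have "(a - p) - (a - e) = e - p" by simp
    ultimately have J: "e - p \<in> jacobson" by metis
    have "(e - p) * (e - p) * (e - p) = e - p" using ci_cube[OF ee pp SJ_C[OF SJ ee]] .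
    then have "e - p = 0" using L1 J by blast
    then show "e = p" by simp
  qed
qed

lemma SJ_P5: assumes SJ: "strongly_J_star_clean st" shows P5
proof
  fix a :: 'a
  obtain p where p: "projection st p" "a - p \<in> units_of_ring" "a * p = p * a" using SJ_ex[OF SJ] by blast
  have pp: "p * p = p" and sp: "st p = p" using p(1) unfolding projection_def by auto
  show "\<exists>!e. idempotent e \<and> a - e \<in> units_of_ring \<and> a * e = e * a
                      \<and> a * st e = st e * a \<and> e - st e \<in> jacobson"
  proof (rule ex1I[of _ p])
    show "idempotent p \<and> a - p \<in> units_of_ring \<and> a * p = p * a
                      \<and> a * st p = st p * a \<and> p - st p \<in> jacobson"
      using pp sp p J_zero unfolding idempotent_def by simp
  next
    fix e assume e: "idempotent e \<and> a - e \<in> units_of_ring \<and> a * e = e * a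
                      \<and> a * st e = st e * a \<and> e - st e \<in> jacobson"
    then have "e * e = e" unfolding idempotent_def by simp
    then show "e = p" using SJ_un[OF SJ _ pp _ p(2)] e by blast
  qed
qed

lemma P5_SJ: assumes H: P5 shows "strongly_J_star_clean st"
proof -
  have U1: "\<exists>!e. idempotent e \<and> a - e \<in> units_of_ring \<and> a * e = e * a
                      \<and> a * st e = st e * a \<and> e - st e \<in> jacobson" for a :: 'a
    using H by blast
  have P: "\<And>g :: 'a. g * g = g \<Longrightarrow> st g = g" using P5_P[OF H] by blast
  show ?thesis
  proof (rule abs_SJ[OF P])
    show "\<exists>e. e * e = e \<and> a - e \<in> units_of_ring" for a :: 'a
      using ex1_implies_ex[OF U1[of a]] unfolding idempotent_def by blast
    show "e = g" if "e * e = e" "g * g = g" "a - e \<in> units_of_ring" "a - g \<in> units_of_ring" for a e g :: 'a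
    proof (rule ex1_uniq[OF U1[of a]])
      show "idempotent e \<and> a - e \<in> units_of_ring \<and> a * e = e * a
                      \<and> a * st e = st e * a \<and> e - st e \<in> jacobson"
        using that P[of e] CENT[OF P that(1), of a] J_zero unfolding idempotent_def by simp
      show "idempotent g \<and> a - g \<in> units_of_ring \<and> a * g = g * a
                      \<and> a * st g = st g * a \<and> g - st g \<in> jacobson"
        using that P[of g] CENT[OF P that(2), of a] J_zero unfolding idempotent_def by simp
    qed
  qed
qed

end

theorem theorem3p2:
  fixes st :: "'a::ring_1 \<Rightarrow> 'a"
  assumes "star_ring st"
  shows "(strongly_J_star_clean st \<longleftrightarrow> uniquely_clean TYPE('a) \<and> strongly_star_clean st)
       \<and> (strongly_J_star_clean st \<longleftrightarrow> uniquely_strongly_star_clean st)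
       \<and> (strongly_J_star_clean st \<longleftrightarrow> uniquely_J_star_clean st)
       \<and> (strongly_J_star_clean st \<longleftrightarrow>
            (\<forall>a. \<exists>!e. idempotent e \<and> a - e \<in> units_of_ring \<and> a * e = e * a
                      \<and> a * st e = st e * a \<and> e - st e \<in> jacobson))"
proof -
  interpret S: srg st by (rule srg.intro[OF assms])
  show ?thesis
    using S.SJ_UC S.SJ_SC S.UCSC_SJ S.SJ_USC S.USC_SJ S.SJ_UJ S.UJ_SJ S.SJ_P5 S.P5_SJ by blast
qed



end
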